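(* Let $\Gamma$ be a splice diagram satisfying the edge determinant condition and let $a,b$ be two adjacent nodes of $\Gamma$. Let $P_a$ (resp. $P_b$) be the set of leaves $\lambda$ of $\Gamma$ with $a\in[\lambda,b]$ (resp. $b\in[\lambda,a]$). Then: (1) $\beta^{a}_{P_a}=\beta^{b}_{P_a}$ and $\beta^{a}_{P_b}=\beta^{b}_{P_b}$; denote these points $\beta_{P_a}$ and $\beta_{P_b}$. (2) The points $\rho(a)$ and $\rho(b)$ lie on the segment $[\beta_{P_a},\beta_{P_b}]$. (3) Identifying this segment with $[0,1]$ via $\beta_{P_a}\mapsto0$, $\beta_{P_b}\mapsto1$, we have $\beta_{P_a}<\rho(a)<\rho(b)<\beta_{P_b}$.
   Context: A splice diagram is a finite tree $\Gamma$ with at least one vertex of valency $\geq3$ and no vertex of valency $2$; vertices of valency $1$ are leaves, others nodes. For each node $v$ and edge $e$ at $v$ a positive integer weight $d_{v,e}$ is given; $d_v=\prod_{e\ni v}d_{v,e}$; $d_{v,u}$ is the weight at $v$ of the edge toward $u$. For distinct vertices $u,v$, $\ell_{u,v}$ is the product of all $d_{w,e}$ with $w$ a node on the geodesic $[u,v]$ and $e$ an edge at $w$ not in $[u,v]$. Edge determinant condition: $d_{u,v}d_{v,u}>\ell_{u,v}$ for every edge $[u,v]$ between nodes. With $n$ leaves, let $(e_\lambda)$ be the standard basis of $\mathbb{R}^n$ indexed by leaves, $w_\lambda=e_\lambda$, and $w_u=\sum_\lambda\ell_{u,\lambda}e_\lambda$ for a node $u$. Set $\rho(u)=w_u/|w_u|$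 ($|\cdot|$ the $1$-norm) for every vertex $u$. For a node $v$ and a set $L$ of leaves, the barycenter is $\beta^v_L=\sum_{\lambda\in L}\frac{\ell_{v,\lambda}}{\ell}e_\lambda$ with $\ell=\sum_{\lambda\in L}\ell_{v,\lambda}$. *)

theory Defs
  imports Main Complex_Main
begin

(* Trees are given by a vertex set V and a symmetric irreflexive adjacency relation E.
   Edge weights: d v u is the weight d_{v,e} at the node v of the edge e = [v,u]. *)

definition walk :: "('v \<Rightarrow> 'v \<Rightarrow> bool) \<Rightarrow> 'v list \<Rightarrow> bool" where
  "walk E p \<longleftrightarrow> (\<forall>i. Suc i < length p \<longrightarrow> E (p ! i) (p ! Suc i))"

definition spath :: "'v set \<Rightarrow> ('v \<Rightarrow> 'v \<Rightarrow> bool) \<Rightarrow> 'v \<Rightarrow> 'v \<Rightarrow> 'v list \<Rightarrow> bool" where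
  "spath V E u v p \<longleftrightarrow> p \<noteq> [] \<and> hd p = u \<and> last p = v \<and> set p \<subseteq> V \<and> distinct p \<and> walk E p"

definition is_tree :: "'v set \<Rightarrow> ('v \<Rightarrow> 'v \<Rightarrow> bool) \<Rightarrow> bool" where
  "is_tree V E \<longleftrightarrow> finite V \<and> V \<noteq> {} \<and>
     (\<forall>x y. E x y \<longrightarrow> x \<in> V \<and> y \<in> V) \<and>
     (\<forall>x y. E x y \<longrightarrow> E y x) \<and> (\<forall>x. \<not> E x x) \<and>
     (\<forall>u\<in>V. \<forall>v\<in>V. \<exists>!p. spath V E u v p)"

definition geodpath :: "'v set \<Rightarrow> ('v \<Rightarrow> 'v \<Rightarrow> bool) \<Rightarrow> 'v \<Rightarrow> 'v \<Rightarrow> 'v list" where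
  "geodpath V E u v = (THE p. spath V E u v p)"

definition geod :: "'v set \<Rightarrow> ('v \<Rightarrow> 'v \<Rightarrow> bool) \<Rightarrow> 'v \<Rightarrow> 'v \<Rightarrow> 'v set" where
  "geod V E u v = set (geodpath V E u v)"

definition edge_on_geod :: "'v set \<Rightarrow> ('v \<Rightarrow> 'v \<Rightarrow> bool) \<Rightarrow> 'v \<Rightarrow> 'v \<Rightarrow> 'v \<Rightarrow> 'v \<Rightarrow> bool" where
  "edge_on_geod V E u v w x \<longleftrightarrow>
     (let p = geodpath V E u v in \<exists>i. Suc i < length p \<and> {p ! i, p ! Suc i} = {w, x})"

definition valency :: "'v set \<Rightarrow> ('v \<Rightarrow> 'v \<Rightarrow> bool) \<Rightarrow> 'v \<Rightarrow> nat" where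
  "valency V E v = card {u \<in> V. E v u}"

definition is_leaf :: "'v set \<Rightarrow> ('v \<Rightarrow> 'v \<Rightarrow> bool) \<Rightarrow> 'v \<Rightarrow> bool" where
  "is_leaf V E v \<longleftrightarrow> v \<in> V \<and> valency V E v = 1"

definition is_node :: "'v set \<Rightarrow> ('v \<Rightarrow> 'v \<Rightarrow> bool) \<Rightarrow> 'v \<Rightarrow> bool" where
  "is_node V E v \<longleftrightarrow> v \<in> V \<and> \<not> is_leaf V E v"

definition splice_diagram :: "'v set \<Rightarrow> ('v \<Rightarrow> 'v \<Rightarrow> bool) \<Rightarrow> ('v \<Rightarrow> 'v \<Rightarrow> nat) \<Rightarrow> bool" where
  "splice_diagram V E d \<longleftrightarrow> is_tree V E \<and>
     (\<exists>v\<in>V. valency V E v \<ge> 3) \<and> (\<forall>v\<in>V. valency V E v \<noteq> 2) \<and>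
     (\<forall>v u. is_node V E v \<and> E v u \<longrightarrow> d v u > 0)"

definition dtow :: "'v set \<Rightarrow> ('v \<Rightarrow> 'v \<Rightarrow> bool) \<Rightarrow> ('v \<Rightarrow> 'v \<Rightarrow> nat) \<Rightarrow> 'v \<Rightarrow> 'v \<Rightarrow> nat" where
  "dtow V E d v u = d v (geodpath V E v u ! 1)"

definition ell :: "'v set \<Rightarrow> ('v \<Rightarrow> 'v \<Rightarrow> bool) \<Rightarrow> ('v \<Rightarrow> 'v \<Rightarrow> nat) \<Rightarrow> 'v \<Rightarrow> 'v \<Rightarrow> nat" where
  "ell V E d u v = (\<Prod>w \<in> {w \<in> geod V E u v. is_node V E w}.
      \<Prod>x \<in> {x \<in> V. E w x \<and> \<not> edge_on_geod V E u v w x}. d w x)"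

definition edge_determinant :: "'v set \<Rightarrow> ('v \<Rightarrow> 'v \<Rightarrow> bool) \<Rightarrow> ('v \<Rightarrow> 'v \<Rightarrow> nat) \<Rightarrow> bool" where
  "edge_determinant V E d \<longleftrightarrow>
     (\<forall>u v. is_node V E u \<and> is_node V E v \<and> E u v \<longrightarrow>
        dtow V E d u v * dtow V E d v u > ell V E d u v)"

(* vectors in R^n (n = number of leaves) are functions 'v \<Rightarrow> real vanishing off the leaves *)
definition wvec :: "'v set \<Rightarrow> ('v \<Rightarrow> 'v \<Rightarrow> bool) \<Rightarrow> ('v \<Rightarrow> 'v \<Rightarrow> nat) \<Rightarrow> 'v \<Rightarrow> 'v \<Rightarrow> real" where
  "wvec V E d u = (if is_leaf V E u then (\<lambda>\<mu>. if \<mu> = u then 1 else 0)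
                   else (\<lambda>\<mu>. if is_leaf V E \<mu> then real (ell V E d u \<mu>) else 0))"

definition norm1 :: "'v set \<Rightarrow> ('v \<Rightarrow> 'v \<Rightarrow> bool) \<Rightarrow> ('v \<Rightarrow> real) \<Rightarrow> real" where
  "norm1 V E f = (\<Sum>\<mu> \<in> {\<mu>. is_leaf V E \<mu>}. \<bar>f \<mu>\<bar>)"

definition rho :: "'v set \<Rightarrow> ('v \<Rightarrow> 'v \<Rightarrow> bool) \<Rightarrow> ('v \<Rightarrow> 'v \<Rightarrow> nat) \<Rightarrow> 'v \<Rightarrow> 'v \<Rightarrow> real" where
  "rho V E d u = (\<lambda>\<mu>. wvec V E d u \<mu> / norm1 V E (wvec V E d u))"

definition bary :: "'v set \<Rightarrow> ('v \<Rightarrow> 'v \<Rightarrow> bool) \<Rightarrow> ('v \<Rightarrow> 'v \<Rightarrow> nat) \<Rightarrow> 'v \<Rightarrow> 'v set \<Rightarrow> 'v \<Rightarrow> real" where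
  "bary V E d v L = (\<lambda>\<mu>. if \<mu> \<in> L
       then real (ell V E d v \<mu>) / (\<Sum>l \<in> L. real (ell V E d v l)) else 0)"

end

theory Submission
  imports Defs
begin

lemma walk_Cons: "walk E (y # p) \<longleftrightarrow> (p \<noteq> [] \<longrightarrow> E y (hd p)) \<and> walk E p"
proof
  assume w: "walk E (y # p)"
  have "p \<noteq> [] \<longrightarrow> E y (hd p)"
    using w[unfolded walk_def, rule_format, of 0] by (auto simp: hd_conv_nth)
  moreover have "walk E p" unfolding walk_def
  proof (intro allI impI)
    fix i assume "Suc i < length p"
    then show "E (p ! i) (p ! Suc i)" using w[unfolded walk_def, rule_format, of "Suc i"] by auto
  qed
  ultimately show "(p \<noteq> [] \<longrightarrow> E y (hd p)) \<and> walk E p" by blast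
next
  assume h: "(p \<noteq> [] \<longrightarrow> E y (hd p)) \<and> walk E p"
  show "walk E (y # p)" unfolding walk_def
  proof (intro allI impI)
    fix i assume i: "Suc i < length (y # p)"
    show "E ((y # p) ! i) ((y # p) ! Suc i)"
    proof (cases i)
      case 0 then show ?thesis using h i by (auto simp: hd_conv_nth)
    next
      case (Suc j) then show ?thesis using h i by (auto simp: walk_def)
    qed
  qed
qed

lemma walk_rev:
  assumes "\<forall>x y. E x y \<longrightarrow> E y x" "walk E p"
  shows "walk E (rev p)"
  unfolding walk_def
proof (intro allI impI)
  fix i assume i: "Suc i < length (rev p)"
  have "E (p ! (length p - Suc (Suc i))) (p ! Suc (length p - Suc (Suc i)))"
    using assms(2) i unfolding walk_def by auto
  moreover have "Suc (length p - Suc (Suc i)) = length p - Suc i" using i by auto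
  ultimately show "E (rev p ! i) (rev p ! Suc i)" using assms(1) i
    by (auto simp: rev_nth)
qed

lemma walk_drop: "walk E p \<Longrightarrow> walk E (drop j p)"
  unfolding walk_def by auto

lemma walk_snoc: "walk E p \<Longrightarrow> p \<noteq> [] \<Longrightarrow> E (last p) x \<Longrightarrow> walk E (p @ [x])"
  unfolding walk_def
proof (intro allI impI)
  fix i assume w: "\<forall>i. Suc i < length p \<longrightarrow> E (p ! i) (p ! Suc i)" and ne: "p \<noteq> []"
    and l: "E (last p) x" and i: "Suc i < length (p @ [x])"
  show "E ((p @ [x]) ! i) ((p @ [x]) ! Suc i)"
  proof (cases "Suc i < length p")
    case True then show ?thesis using w by (auto simp: nth_append)
  next
    case False
    then have "i = length p - 1" using i by auto
    then show ?thesis using l ne by (simp add: nth_append last_conv_nth)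
  qed
qed

lemma tree_unique:
  assumes "is_tree V E" "spath V E u v p" "spath V E u v q" shows "p = q"
proof -
  have "u \<in> V" "v \<in> V" using assms(2) unfolding spath_def
    by (auto dest: hd_in_set last_in_set)
  then show ?thesis using assms unfolding is_tree_def by blast
qed

lemma geodpath_spath:
  assumes "is_tree V E" "u \<in> V" "v \<in> V" shows "spath V E u v (geodpath V E u v)"
proof -
  have "\<exists>!p. spath V E u v p" using assms unfolding is_tree_def by blast
  then show ?thesis unfolding geodpath_def by (rule theI')
qed

lemma geodpath_eq:
  assumes "is_tree V E" "spath V E u v p" shows "geodpath V E u v = p"
proof -
  have "u \<in> V" "v \<in> V" using assms(2) unfolding spath_def
    by (auto dest: hd_in_set last_in_set)
  then show ?thesis using assms geodpath_spath tree_unique by metis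
qed

lemma spath_rev:
  assumes "is_tree V E" "spath V E u v p" shows "spath V E v u (rev p)"
  using assms walk_rev[of E p] unfolding spath_def is_tree_def
  by (auto simp: hd_rev last_rev)

lemma geodpath_rev:
  assumes "is_tree V E" "u \<in> V" "v \<in> V"
  shows "geodpath V E v u = rev (geodpath V E u v)"
  using assms geodpath_spath spath_rev geodpath_eq by metis

lemma geod_sym:
  assumes "is_tree V E" "u \<in> V" "v \<in> V"
  shows "geod V E v u = geod V E u v"
  using geodpath_rev[OF assms] unfolding geod_def by simp

lemma spath_drop:
  assumes "spath V E u v p" "j < length p" shows "spath V E (p ! j) v (drop j p)"
  using assms walk_drop unfolding spath_def
  by (auto simp: hd_drop_conv_nth dest: in_set_dropD)

lemma spath_Cons:
  assumes "spath V E u v p" "E y u" "y \<notin> set p" "y \<in> V"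
  shows "spath V E y v (y # p)"
  using assms walk_Cons[of E y p] unfolding spath_def by auto

lemma spath_snoc:
  assumes "spath V E u v p" "E v x" "x \<notin> set p" "x \<in> V"
  shows "spath V E u x (p @ [x])"
  using assms walk_snoc[of E p x] unfolding spath_def by auto

lemma spath_edge:
  assumes "is_tree V E" "E a b" shows "spath V E a b [a, b]"
  using assms unfolding spath_def is_tree_def walk_def
  by (auto simp: less_Suc_eq)

lemma tree_sym: "is_tree V E \<Longrightarrow> E x y \<Longrightarrow> E y x"
  unfolding is_tree_def by blast
lemma tree_irr: "is_tree V E \<Longrightarrow> \<not> E x x"
  unfolding is_tree_def by blast
lemma tree_V: "is_tree V E \<Longrightarrow> E x y \<Longrightarrow> x \<in> V \<and> y \<in> V"
  unfolding is_tree_def by blast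
lemma tree_fin: "is_tree V E \<Longrightarrow> finite V"
  unfolding is_tree_def by blast

lemma side1:
  assumes T: "is_tree V E" and ab: "E a b" and l: "l \<in> V" and nb: "b \<notin> set (geodpath V E a l)"
  shows "geodpath V E b l = b # geodpath V E a l"
proof -
  have V: "a \<in> V" "b \<in> V" using tree_V[OF T ab] by auto
  have "spath V E a l (geodpath V E a l)" using geodpath_spath[OF T V(1) l] .
  then have "spath V E b l (b # geodpath V E a l)"
    using spath_Cons[of V E a l _ b] nb V tree_sym[OF T ab] by blast
  then show ?thesis using geodpath_eq[OF T] by blast
qed

lemma side2:
  assumes T: "is_tree V E" and ab: "E a b" and l: "l \<in> V" and bi: "b \<in> set (geodpath V E a l)"
  shows "a \<notin> set (geodpath V E b l)"
proof -
  have V: "a \<in> V" "b \<in> V" using tree_V[OF T ab] by auto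
  define p where "p = geodpath V E a l"
  have sp: "spath V E a l p" unfolding p_def using geodpath_spath[OF T V(1) l] .
  obtain j where j: "j < length p" "p ! j = b" using bi unfolding p_def by (auto simp: in_set_conv_nth)
  have ne: "p \<noteq> []" and h: "hd p = a" and dp: "distinct p" using sp unfolding spath_def by auto
  have p0: "p ! 0 = a" using ne h by (simp add: hd_conv_nth)
  have "a \<noteq> b" using ab tree_irr[OF T] by auto
  have j0: "j \<noteq> 0"
  proof
    assume "j = 0" then show False using j p0 \<open>a \<noteq> b\<close> by simp
  qed
  have "spath V E b l (drop j p)" using spath_drop[OF sp j(1)] j by simp
  then have g: "geodpath V E b l = drop j p" using geodpath_eq[OF T] by blast
  show ?thesis
  proof
    assume "a \<in> set (geodpath V E b l)"
    then obtain i where i: "i < length (drop j p)" "drop j p ! i = a" unfolding g by (auto simp: in_set_conv_nth)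
    define k where "k = j + i"
    have k: "j \<le> k" "k < length p" "p ! k = a" using i j unfolding k_def by auto
    have "0 < length p" using ne by simp
    then have "k = 0" using p0 k nth_eq_iff_index_eq[OF dp, of k 0] by simp
    then show False using k j0 by auto
  qed
qed

lemma side_iff:
  assumes T: "is_tree V E" and ab: "E a b" and l: "l \<in> V"
  shows "a \<in> set (geodpath V E b l) \<longleftrightarrow> b \<notin> set (geodpath V E a l)"
proof -
  have aV: "a \<in> V" using tree_V[OF T ab] by auto
  have "a \<in> set (geodpath V E a l)" using geodpath_spath[OF T aV l] unfolding spath_def
    by (metis hd_in_set)
  then show ?thesis using side1[OF T ab l] side2[OF T ab l] by auto
qed

lemma leaf_exists:
  assumes T: "is_tree V E" and ab: "E a b" and ac: "E a c" and cb: "c \<noteq> b"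
  shows "\<exists>z. is_leaf V E z \<and> a \<in> set (geodpath V E b z)"
proof -
  have V: "a \<in> V" "b \<in> V" "c \<in> V" using tree_V[OF T ab] tree_V[OF T ac] by auto
  define P where "P = (\<lambda>p. \<exists>z. spath V E b z p \<and> length p \<ge> 2 \<and> p ! 1 = a)"
  have P0: "P [b, a]" unfolding P_def using spath_edge[OF T tree_sym[OF T ab]] by auto
  have bnd: "\<forall>p. P p \<longrightarrow> length p < Suc (card V)"
  proof (intro allI impI)
    fix p assume "P p"
    then have "distinct p" "set p \<subseteq> V" unfolding P_def spath_def by auto
    then have "length p \<le> card V" using distinct_card card_mono[OF tree_fin[OF T]] by metis
    then show "length p < Suc (card V)" by simp
  qed
  obtain p where Pp: "P p" and mx: "\<forall>q. P q \<longrightarrow> length q \<le> length p"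
    using ex_has_greatest_nat[of P "[b,a]" length, OF P0 bnd] by blast
  obtain z where sp: "spath V E b z p" and len: "length p \<ge> 2" and p1: "p ! 1 = a"
    using Pp unfolding P_def by blast
  have ne: "p \<noteq> []" and hp: "hd p = b" and lp: "last p = z" and sV: "set p \<subseteq> V"
    and dp: "distinct p" and wp: "walk E p"
    using sp unfolding spath_def by auto
  have zV: "z \<in> V" using lp ne sV last_in_set by blast
  have zlast: "p ! (length p - 1) = z" using lp ne by (simp add: last_conv_nth)
  have inp: "u \<in> set p" if "E z u" for u
  proof (rule ccontr)
    assume nu: "u \<notin> set p"
    have uV: "u \<in> V" using tree_V[OF T that] by auto
    have "spath V E b u (p @ [u])" using spath_snoc[OF sp that nu uV] .
    moreover have "(p @ [u]) ! 1 = a" using len p1 by (simp add: nth_append)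
    ultimately have "P (p @ [u])" unfolding P_def using len by auto
    then show False using mx by fastforce
  qed
  define n where "n = length p"
  have sn: "Suc (n - 2) < length p" "Suc (n - 2) = length p - 1" using len unfolding n_def by auto
  have prev: "E (p ! (n - 2)) z"
    using wp sn zlast unfolding walk_def by metis
  have nb: "{u \<in> V. E z u} = {p ! (n - 2)}"
  proof (intro equalityI subsetI)
    fix u assume "u \<in> {u \<in> V. E z u}"
    then have uz: "E z u" by auto
    obtain j where j: "j < n" "p ! j = u" using inp[OF uz] unfolding n_def by (auto simp: in_set_conv_nth)
    have "j \<noteq> n - 1" using j zlast tree_irr[OF T] uz unfolding n_def by auto
    moreover have "\<not> j < n - 2"
    proof
      assume jl: "j < n - 2"
      have s1: "spath V E u z (drop j p)" using spath_drop[OF sp, of j] j unfolding n_def by auto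
      have s2: "spath V E u z [u, z]" using spath_edge[OF T tree_sym[OF T uz]] .
      have "drop j p = [u, z]" using tree_unique[OF T s1 s2] .
      then have "length (drop j p) = 2" by simp
      then show False using jl unfolding n_def by simp
    qed
    ultimately have "j = n - 2" using j by auto
    then show "u \<in> {p ! (n - 2)}" using j by auto
  next
    fix u assume "u \<in> {p ! (n - 2)}"
    then show "u \<in> {u \<in> V. E z u}" using prev tree_sym[OF T] tree_V[OF T] by blast
  qed
  have leaf: "is_leaf V E z" unfolding is_leaf_def valency_def using nb zV by simp
  have "a \<in> set p" using p1 len by (metis Suc_1 Suc_le_lessD nth_mem)
  moreover have "geodpath V E b z = p" using geodpath_eq[OF T sp] .
  ultimately show ?thesis using leaf by auto
qed

definition eds :: "'v list \<Rightarrow> 'v \<Rightarrow> 'v \<Rightarrow> bool" where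
  "eds r w x \<longleftrightarrow> (\<exists>i. Suc i < length r \<and> {r ! i, r ! Suc i} = {w, x})"

lemma eog_eds: "edge_on_geod V E u v w x = eds (geodpath V E u v) w x"
  unfolding edge_on_geod_def eds_def Let_def by simp

lemma eds_Cons: "r \<noteq> [] \<Longrightarrow> eds (y # r) w x \<longleftrightarrow> {y, hd r} = {w, x} \<or> eds r w x"
  unfolding eds_def
proof
  assume ne: "r \<noteq> []" and h: "\<exists>i. Suc i < length (y # r) \<and> {(y # r) ! i, (y # r) ! Suc i} = {w, x}"
  then obtain i where i: "Suc i < length (y # r)" "{(y # r) ! i, (y # r) ! Suc i} = {w, x}" by blast
  show "{y, hd r} = {w, x} \<or> (\<exists>i. Suc i < length r \<and> {r ! i, r ! Suc i} = {w, x})"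
  proof (cases i)
    case 0 then show ?thesis using i ne by (simp add: hd_conv_nth)
  next
    case (Suc j) then show ?thesis using i by auto
  qed
next
  assume ne: "r \<noteq> []" and h: "{y, hd r} = {w, x} \<or> (\<exists>i. Suc i < length r \<and> {r ! i, r ! Suc i} = {w, x})"
  from h show "\<exists>i. Suc i < length (y # r) \<and> {(y # r) ! i, (y # r) ! Suc i} = {w, x}"
  proof
    assume "{y, hd r} = {w, x}"
    then show ?thesis using ne by (intro exI[of _ 0]) (simp add: hd_conv_nth)
  next
    assume "\<exists>i. Suc i < length r \<and> {r ! i, r ! Suc i} = {w, x}"
    then obtain i where "Suc i < length r" "{r ! i, r ! Suc i} = {w, x}" by blast
    then show ?thesis by (intro exI[of _ "Suc i"]) simp
  qed
qed

lemma eds_set: "eds r w x \<Longrightarrow> w \<in> set r \<and> x \<in> set r"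
  unfolding eds_def by (auto simp: doubleton_eq_iff)

lemma eds_single: "eds [u] w x = False"
  unfolding eds_def by simp

definition Qp :: "'v set \<Rightarrow> ('v \<Rightarrow> 'v \<Rightarrow> bool) \<Rightarrow> ('v \<Rightarrow> 'v \<Rightarrow> nat) \<Rightarrow> 'v \<Rightarrow> 'v \<Rightarrow> nat" where
  "Qp V E d v u = (\<Prod>x \<in> {x \<in> V. E v x \<and> x \<noteq> u}. d v x)"

lemma ell_alt: "ell V E d u v = (\<Prod>w \<in> {w \<in> set (geodpath V E u v). is_node V E w}.
      \<Prod>x \<in> {x \<in> V. E w x \<and> \<not> eds (geodpath V E u v) w x}. d w x)"
  unfolding ell_def geod_def eog_eds ..

lemma ell_shift:
  assumes T: "is_tree V E" and ab: "E a b" and na: "is_node V E a" and nb: "is_node V E b"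
    and l: "l \<in> V" and bn: "b \<notin> set (geodpath V E a l)"
  shows "ell V E d a l * Qp V E d b a = d a b * ell V E d b l"
proof -
  have aV: "a \<in> V" "b \<in> V" using tree_V[OF T ab] by auto
  have anb: "a \<noteq> b" using tree_irr[OF T] ab by auto
  define r where "r = geodpath V E a l"
  have spr: "spath V E a l r" unfolding r_def using geodpath_spath[OF T aV(1) l] .
  have rne: "r \<noteq> []" and hr: "hd r = a" using spr unfolding spath_def by auto
  have ar: "a \<in> set r" using rne hr hd_in_set by blast
  have gb: "geodpath V E b l = b # r" unfolding r_def using side1[OF T ab l bn] .
  have bn': "b \<notin> set r" using bn unfolding r_def .
  have eB: "eds (b # r) w x \<longleftrightarrow> {b, a} = {w, x} \<or> eds r w x" for w x
    using eds_Cons[OF rne] hr by simp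
  define F where "F = (\<lambda>w. \<Prod>x \<in> {x \<in> V. E w x \<and> \<not> eds r w x}. d w x)"
  define F' where "F' = (\<lambda>w. \<Prod>x \<in> {x \<in> V. E w x \<and> \<not> eds (b # r) w x}. d w x)"
  define N where "N = {w \<in> set r. is_node V E w}"
  have finN: "finite N" unfolding N_def by simp
  have aN: "a \<in> N" unfolding N_def using ar na by simp
  have bN: "b \<notin> N" unfolding N_def using bn' by simp
  have ea: "ell V E d a l = (\<Prod>w\<in>N. F w)" unfolding ell_alt N_def F_def r_def ..
  have "ell V E d b l = (\<Prod>w\<in>insert b N. F' w)"
    unfolding ell_alt gb N_def F'_def using nb by (simp add: Collect_conv_if insert_Collect) 
      (smt (verit) Collect_cong insert_iff set_simps(2))
  also have "\<dots> = F' b * (\<Prod>w\<in>N. F' w)" using finN bN by simp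
  finally have eb: "ell V E d b l = F' b * (\<Prod>w\<in>N. F' w)" .
  have rest: "(\<Prod>w\<in>N - {a}. F w) = (\<Prod>w\<in>N - {a}. F' w)"
  proof (rule prod.cong[OF refl])
    fix w assume w: "w \<in> N - {a}"
    then have "w \<noteq> a" "w \<noteq> b" using bN by auto
    then have "\<And>x. eds (b # r) w x \<longleftrightarrow> eds r w x" using eB by (auto simp: doubleton_eq_iff)
    then show "F w = F' w" unfolding F_def F'_def by simp
  qed
  have Fb: "F' b = Qp V E d b a"
  proof -
    have "\<And>x. eds (b # r) b x \<longleftrightarrow> x = a"
      using eB bn' anb by (auto simp: doubleton_eq_iff dest: eds_set)
    then have "{x \<in> V. E b x \<and> \<not> eds (b # r) b x} = {x \<in> V. E b x \<and> x \<noteq> a}" by auto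
    then show ?thesis unfolding F'_def Qp_def by simp
  qed
  have Fa: "F a = d a b * F' a"
  proof -
    have "\<And>x. eds (b # r) a x \<longleftrightarrow> x = b \<or> eds r a x"
      using eB anb by (auto simp: doubleton_eq_iff)
    then have S: "{x \<in> V. E a x \<and> \<not> eds (b # r) a x} = {x \<in> V. E a x \<and> \<not> eds r a x} - {b}" by auto
    have bin: "b \<in> {x \<in> V. E a x \<and> \<not> eds r a x}" using aV ab bn' by (auto dest: eds_set)
    have fin: "finite {x \<in> V. E a x \<and> \<not> eds r a x}" using tree_fin[OF T] by simp
    show ?thesis unfolding F_def F'_def S using prod.remove[OF fin bin] by simp
  qed
  have "ell V E d a l = F a * (\<Prod>w\<in>N - {a}. F w)" unfolding ea using prod.remove[OF finN aN] .
  moreover have "ell V E d b l = F' b * (F' a * (\<Prod>w\<in>N - {a}. F' w))"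
    unfolding eb using prod.remove[OF finN aN, of F'] by simp
  ultimately show ?thesis unfolding Fa Fb rest by simp
qed

lemma geodpath_edge:
  assumes T: "is_tree V E" and ab: "E a b" shows "geodpath V E a b = [a, b]"
  using geodpath_eq[OF T spath_edge[OF T ab]] .

lemma ell_edge:
  assumes T: "is_tree V E" and ab: "E a b" and na: "is_node V E a" and nb: "is_node V E b"
  shows "ell V E d a b = Qp V E d a b * Qp V E d b a"
proof -
  have anb: "a \<noteq> b" using tree_irr[OF T] ab by auto
  have e: "eds [a, b] w x \<longleftrightarrow> {a, b} = {w, x}" for w x
  proof -
    have "\<not> eds [b] w x" by (simp add: eds_def)
    then show ?thesis using eds_Cons[of "[b]" a w x] by simp
  qed
  have N: "{w \<in> set [a, b]. is_node V E w} = {a, b}" using na nb by auto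
  have S1: "{x \<in> V. E a x \<and> \<not> eds [a, b] a x} = {x \<in> V. E a x \<and> x \<noteq> b}"
    using e anb by (auto simp: doubleton_eq_iff)
  have S2: "{x \<in> V. E b x \<and> \<not> eds [a, b] b x} = {x \<in> V. E b x \<and> x \<noteq> a}"
    using e anb by (auto simp: doubleton_eq_iff)
  show ?thesis unfolding ell_alt geodpath_edge[OF T ab] N using anb
    by (simp add: S1 S2 Qp_def)
qed

lemma dtow_edge:
  assumes T: "is_tree V E" and ab: "E a b" shows "dtow V E d a b = d a b"
  unfolding dtow_def geodpath_edge[OF T ab] by simp

lemma ell_pos:
  assumes S: "splice_diagram V E d" shows "0 < ell V E d u v"
  unfolding ell_def using S unfolding splice_diagram_def
  by (intro prod_pos) auto

lemma Qp_pos: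
  assumes S: "splice_diagram V E d" and "is_node V E v" shows "0 < Qp V E d v u"
  unfolding Qp_def using S assms(2) unfolding splice_diagram_def
  by (intro prod_pos) auto

lemma other_nb:
  assumes S: "splice_diagram V E d" and ab: "E a b" and na: "is_node V E a"
  shows "\<exists>c. E a c \<and> c \<noteq> b"
proof (rule ccontr)
  assume "\<not> (\<exists>c. E a c \<and> c \<noteq> b)"
  then have h: "\<And>u. E a u \<Longrightarrow> u = b" by blast
  have T: "is_tree V E" using S unfolding splice_diagram_def by blast
  have "{u \<in> V. E a u} = {b}" using h tree_V[OF T ab] ab by blast
  then have "valency V E a = 1" unfolding valency_def by simp
  then show False using na unfolding is_node_def is_leaf_def by simp
qed

theorem lemma5p6:
  fixes V :: "'v set" and E :: "'v \<Rightarrow> 'v \<Rightarrow> bool" and d :: "'v \<Rightarrow> 'v \<Rightarrow> nat"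
    and a b :: 'v
  assumes "splice_diagram V E d"
    and "edge_determinant V E d"
    and "is_node V E a" and "is_node V E b" and "E a b"
  defines "Pa \<equiv> {l. is_leaf V E l \<and> a \<in> geod V E l b}"
    and "Pb \<equiv> {l. is_leaf V E l \<and> b \<in> geod V E l a}"
  shows "bary V E d a Pa = bary V E d b Pa \<and> bary V E d a Pb = bary V E d b Pb \<and>
    (\<exists>ta tb::real. 0 < ta \<and> ta < tb \<and> tb < 1 \<and>
       rho V E d a = (\<lambda>\<mu>. (1 - ta) * bary V E d a Pa \<mu> + ta * bary V E d a Pb \<mu>) \<and>
       rho V E d b = (\<lambda>\<mu>. (1 - tb) * bary V E d a Pa \<mu> + tb * bary V E d a Pb \<mu>))"
proof -
  note S = assms(1)
  have T: "is_tree V E" using S unfolding splice_diagram_def by blast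
  note ab = assms(5) and na = assms(3) and nb = assms(4)
  have ba: "E b a" using tree_sym[OF T ab] .
  have aV: "a \<in> V" "b \<in> V" using tree_V[OF T ab] by auto
  have leafV: "l \<in> V" if "is_leaf V E l" for l using that unfolding is_leaf_def by simp
  define Lv where "Lv = {l. is_leaf V E l}"
  have "Lv \<subseteq> V" unfolding Lv_def using leafV by blast
  then have finL: "finite Lv" using tree_fin[OF T] finite_subset by blast
  have ga: "a \<in> geod V E l b \<longleftrightarrow> b \<notin> set (geodpath V E a l)" if "l \<in> V" for l
    using geod_sym[OF T aV(2) that] side_iff[OF T ab that] unfolding geod_def by simp
  have gb: "b \<in> geod V E l a \<longleftrightarrow> b \<in> set (geodpath V E a l)" if "l \<in> V" for l
    using geod_sym[OF T aV(1) that] unfolding geod_def by simp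
  have Pa': "Pa = {l. is_leaf V E l \<and> b \<notin> set (geodpath V E a l)}"
    unfolding Pa_def
  proof (rule Collect_cong)
    fix l show "(is_leaf V E l \<and> a \<in> geod V E l b) = (is_leaf V E l \<and> b \<notin> set (geodpath V E a l))"
      using ga[OF leafV[of l]] by blast
  qed
  have Pb': "Pb = {l. is_leaf V E l \<and> b \<in> set (geodpath V E a l)}"
    unfolding Pb_def
  proof (rule Collect_cong)
    fix l show "(is_leaf V E l \<and> b \<in> geod V E l a) = (is_leaf V E l \<and> b \<in> set (geodpath V E a l))"
      using gb[OF leafV[of l]] by blast
  qed
  have disj: "Pa \<inter> Pb = {}" unfolding Pa' Pb' by auto
  have un: "Pa \<union> Pb = Lv" unfolding Pa' Pb' Lv_def by auto
  have finA: "finite Pa" "finite Pb" using un finL by auto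
  obtain c where c: "E a c" "c \<noteq> b" using other_nb[OF S ab na] by blast
  obtain za where za: "is_leaf V E za" "a \<in> set (geodpath V E b za)" using leaf_exists[OF T ab c] by blast
  have zaP: "za \<in> Pa" unfolding Pa' using za side_iff[OF T ab leafV[OF za(1)]] by auto
  obtain c' where c': "E b c'" "c' \<noteq> a" using other_nb[OF S ba nb] by blast
  obtain zb where zb: "is_leaf V E zb" "b \<in> set (geodpath V E a zb)" using leaf_exists[OF T ba c'] by blast
  have zbP: "zb \<in> Pb" unfolding Pb' using zb by auto
  define la where "la = (\<lambda>l. real (ell V E d a l))"
  define lb where "lb = (\<lambda>l. real (ell V E d b l))"
  define qa where "qa = real (Qp V E d a b)"
  define qb where "qb = real (Qp V E d b a)"
  define dab where "dab = real (d a b)"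
  define dba where "dba = real (d b a)"
  have ka: "la l * qb = dab * lb l" if "l \<in> Pa" for l
  proof -
    have "l \<in> V" "b \<notin> set (geodpath V E a l)" using that leafV unfolding Pa' by auto
    from ell_shift[OF T ab na nb this]
    have "real (ell V E d a l * Qp V E d b a) = real (d a b * ell V E d b l)" by (rule arg_cong)
    then show ?thesis unfolding la_def lb_def qb_def dab_def of_nat_mult .
  qed
  have kb: "lb l * qa = dba * la l" if "l \<in> Pb" for l
  proof -
    have lV: "l \<in> V" and "b \<in> set (geodpath V E a l)" using that leafV unfolding Pb' by auto
    then have "a \<notin> set (geodpath V E b l)" using side2[OF T ab lV] by blast
    from ell_shift[OF T ba nb na lV this]
    have "real (ell V E d b l * Qp V E d a b) = real (d b a * ell V E d a l)" by (rule arg_cong)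
    then show ?thesis unfolding la_def lb_def qa_def dba_def of_nat_mult .
  qed
  have lapos: "0 < la l" "0 < lb l" for l unfolding la_def lb_def using ell_pos[OF S] by auto
  have qpos: "0 < qa" "0 < qb" unfolding qa_def qb_def
    using Qp_pos[OF S na, of b] Qp_pos[OF S nb, of a] by simp_all
  have "0 < d a b" using S na ab unfolding splice_diagram_def by blast
  moreover have "0 < d b a" using S nb ba unfolding splice_diagram_def by blast
  ultimately have dpos: "0 < dab" "0 < dba" unfolding dab_def dba_def by simp_all
  have ed: "qa * qb < dab * dba"
  proof -
    have "ell V E d a b < dtow V E d a b * dtow V E d b a"
      using assms(2) na nb ab unfolding edge_determinant_def by blast
    then have "Qp V E d a b * Qp V E d b a < d a b * d b a"
      unfolding ell_edge[OF T ab na nb] dtow_edge[OF T ab] dtow_edge[OF T ba] .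
    then have "real (Qp V E d a b * Qp V E d b a) < real (d a b * d b a)" by (simp only: of_nat_less_iff)
    then show ?thesis unfolding qa_def qb_def dab_def dba_def of_nat_mult .
  qed
  define A where "A = (\<Sum>l\<in>Pa. la l)"
  define B where "B = (\<Sum>l\<in>Pb. la l)"
  define A' where "A' = (\<Sum>l\<in>Pa. lb l)"
  define B' where "B' = (\<Sum>l\<in>Pb. lb l)"
  have Apos: "0 < A" "0 < B" "0 < A'" "0 < B'" unfolding A_def B_def A'_def B'_def
    using finA zaP zbP lapos by (auto intro!: sum_pos)
  have AA: "A * qb = dab * A'"
  proof -
    have "A * qb = (\<Sum>l\<in>Pa. la l * qb)" unfolding A_def by (rule sum_distrib_right)
    also have "\<dots> = (\<Sum>l\<in>Pa. dab * lb l)" by (rule sum.cong[OF refl]) (rule ka)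
    also have "\<dots> = dab * A'" unfolding A'_def by (rule sum_distrib_left[symmetric])
    finally show ?thesis .
  qed
  have BB: "B' * qa = dba * B"
  proof -
    have "B' * qa = (\<Sum>l\<in>Pb. lb l * qa)" unfolding B'_def by (rule sum_distrib_right)
    also have "\<dots> = (\<Sum>l\<in>Pb. dba * la l)" by (rule sum.cong[OF refl]) (rule kb)
    also have "\<dots> = dba * B" unfolding B_def by (rule sum_distrib_left[symmetric])
    finally show ?thesis .
  qed
  have bA: "bary V E d a Pa = bary V E d b Pa"
  proof
    fix \<mu> show "bary V E d a Pa \<mu> = bary V E d b Pa \<mu>"
    proof (cases "\<mu> \<in> Pa")
      case True
      have "la \<mu> * A' * dab = la \<mu> * (dab * A')" by (simp add: mult_ac)
      also have "\<dots> = la \<mu> * (A * qb)" by (simp only: AA)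
      also have "\<dots> = (la \<mu> * qb) * A" by (simp add: mult_ac)
      also have "\<dots> = (dab * lb \<mu>) * A" by (simp only: ka[OF True])
      also have "\<dots> = lb \<mu> * A * dab" by (simp add: mult_ac)
      finally have "la \<mu> * A' * dab = lb \<mu> * A * dab" .
      then have "la \<mu> * A' = lb \<mu> * A" using dpos by simp
      then have "la \<mu> / A = lb \<mu> / A'" using Apos by (simp add: field_simps)
      then show ?thesis using True unfolding bary_def la_def lb_def A_def A'_def by simp
    qed (simp add: bary_def)
  qed
  have bB: "bary V E d a Pb = bary V E d b Pb"
  proof
    fix \<mu> show "bary V E d a Pb \<mu> = bary V E d b Pb \<mu>"
    proof (cases "\<mu> \<in> Pb")
      case True
      have "lb \<mu> * B * dba = lb \<mu> * (dba * B)" by (simp add: mult_ac)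
      also have "\<dots> = lb \<mu> * (B' * qa)" by (simp only: BB)
      also have "\<dots> = (lb \<mu> * qa) * B'" by (simp add: mult_ac)
      also have "\<dots> = (dba * la \<mu>) * B'" by (simp only: kb[OF True])
      also have "\<dots> = la \<mu> * B' * dba" by (simp add: mult_ac)
      finally have "la \<mu> * B' * dba = lb \<mu> * B * dba" by (rule sym)
      then have "la \<mu> * B' = lb \<mu> * B" using dpos by simp
      then have "la \<mu> / B = lb \<mu> / B'" using Apos by (simp add: field_simps)
      then show ?thesis using True unfolding bary_def la_def lb_def B_def B'_def by simp
    qed (simp add: bary_def)
  qed
  have nla: "\<not> is_leaf V E a" "\<not> is_leaf V E b" using na nb unfolding is_node_def by auto
  have wa: "wvec V E d a = (\<lambda>\<mu>. if \<mu> \<in> Lv then la \<mu> else 0)"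
    unfolding wvec_def la_def Lv_def using nla by simp
  have wb: "wvec V E d b = (\<lambda>\<mu>. if \<mu> \<in> Lv then lb \<mu> else 0)"
    unfolding wvec_def lb_def Lv_def using nla by simp
  have na1: "norm1 V E (wvec V E d a) = A + B"
  proof -
    have "norm1 V E (wvec V E d a) = (\<Sum>\<mu>\<in>Lv. la \<mu>)"
      unfolding norm1_def wa Lv_def[symmetric] by (intro sum.cong) (simp_all add: abs_of_pos lapos)
    also have "\<dots> = A + B" unfolding A_def B_def un[symmetric]
      using sum.union_disjoint[OF finA disj] .
    finally show ?thesis .
  qed
  have nb1: "norm1 V E (wvec V E d b) = A' + B'"
  proof -
    have "norm1 V E (wvec V E d b) = (\<Sum>\<mu>\<in>Lv. lb \<mu>)"
      unfolding norm1_def wb Lv_def[symmetric] by (intro sum.cong) (simp_all add: abs_of_pos lapos)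
    also have "\<dots> = A' + B'" unfolding A'_def B'_def un[symmetric]
      using sum.union_disjoint[OF finA disj] .
    finally show ?thesis .
  qed
  define ta where "ta = B / (A + B)"
  define tb where "tb = B' / (A' + B')"
  have rhoa: "rho V E d a = (\<lambda>\<mu>. (if \<mu> \<in> Lv then la \<mu> else 0) / (A + B))"
  proof
    fix \<mu>
    have "rho V E d a \<mu> = wvec V E d a \<mu> / (A + B)" unfolding rho_def na1 by (rule refl)
    then show "rho V E d a \<mu> = (if \<mu> \<in> Lv then la \<mu> else 0) / (A + B)" by (simp add: wa)
  qed
  have rhob: "rho V E d b = (\<lambda>\<mu>. (if \<mu> \<in> Lv then lb \<mu> else 0) / (A' + B'))"
  proof
    fix \<mu>
    have "rho V E d b \<mu> = wvec V E d b \<mu> / (A' + B')" unfolding rho_def nb1 by (rule refl)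
    then show "rho V E d b \<mu> = (if \<mu> \<in> Lv then lb \<mu> else 0) / (A' + B')" by (simp add: wb)
  qed
  have by1: "bary V E d a Pa \<mu> = (if \<mu> \<in> Pa then la \<mu> / A else 0)" for \<mu>
    unfolding bary_def la_def A_def by simp
  have by2: "bary V E d a Pb \<mu> = (if \<mu> \<in> Pb then la \<mu> / B else 0)" for \<mu>
    unfolding bary_def la_def B_def by simp
  have by3: "bary V E d b Pa \<mu> = (if \<mu> \<in> Pa then lb \<mu> / A' else 0)" for \<mu>
    unfolding bary_def lb_def A'_def by simp
  have by4: "bary V E d b Pb \<mu> = (if \<mu> \<in> Pb then lb \<mu> / B' else 0)" for \<mu>
    unfolding bary_def lb_def B'_def by simp
  define ta where "ta = B / (A + B)"
  define tb where "tb = B' / (A' + B')"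
  have ra: "rho V E d a = (\<lambda>\<mu>. (1 - ta) * bary V E d a Pa \<mu> + ta * bary V E d a Pb \<mu>)"
  proof
    fix \<mu>
    have e: "1 - ta = A / (A + B)" unfolding ta_def using Apos by (simp add: field_simps)
    show "rho V E d a \<mu> = (1 - ta) * bary V E d a Pa \<mu> + ta * bary V E d a Pb \<mu>"
      unfolding rhoa by1 by2 e
    proof (cases "\<mu> \<in> Pa")
      case True
      then have "\<mu> \<notin> Pb" "\<mu> \<in> Lv" using disj un by auto
      then show "(if \<mu> \<in> Lv then la \<mu> else 0) / (A + B) = A / (A + B) * (if \<mu> \<in> Pa then la \<mu> / A else 0) + ta * (if \<mu> \<in> Pb then la \<mu> / B else 0)"
        using True Apos by simp
    next
      case False
      show "(if \<mu> \<in> Lv then la \<mu> else 0) / (A + B) = A / (A + B) * (if \<mu> \<in> Pa then la \<mu> / A else 0) + ta * (if \<mu> \<in> Pb then la \<mu> / B else 0)"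
      proof (cases "\<mu> \<in> Pb")
        case True
        then have "\<mu> \<in> Lv" using un by auto
        then show ?thesis using True False Apos unfolding ta_def by simp
      next
        case F2: False
        then have "\<mu> \<notin> Lv" using un False by auto
        then show ?thesis using F2 False by simp
      qed
    qed
  qed
  have rb: "rho V E d b = (\<lambda>\<mu>. (1 - tb) * bary V E d b Pa \<mu> + tb * bary V E d b Pb \<mu>)"
  proof
    fix \<mu>
    have e: "1 - tb = A' / (A' + B')" unfolding tb_def using Apos by (simp add: field_simps)
    show "rho V E d b \<mu> = (1 - tb) * bary V E d b Pa \<mu> + tb * bary V E d b Pb \<mu>"
      unfolding rhob by3 by4 e
    proof (cases "\<mu> \<in> Pa")
      case True
      then have "\<mu> \<notin> Pb" "\<mu> \<in> Lv" using disj un by auto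
      then show "(if \<mu> \<in> Lv then lb \<mu> else 0) / (A' + B') = A' / (A' + B') * (if \<mu> \<in> Pa then lb \<mu> / A' else 0) + tb * (if \<mu> \<in> Pb then lb \<mu> / B' else 0)"
        using True Apos by simp
    next
      case False
      show "(if \<mu> \<in> Lv then lb \<mu> else 0) / (A' + B') = A' / (A' + B') * (if \<mu> \<in> Pa then lb \<mu> / A' else 0) + tb * (if \<mu> \<in> Pb then lb \<mu> / B' else 0)"
      proof (cases "\<mu> \<in> Pb")
        case True
        then have "\<mu> \<in> Lv" using un by auto
        then show ?thesis using True False Apos unfolding tb_def by simp
      next
        case F2: False
        then have "\<mu> \<notin> Lv" using un False by auto
        then show ?thesis using F2 False by simp
      qed
    qed
  qed
  have rb': "rho V E d b = (\<lambda>\<mu>. (1 - tb) * bary V E d a Pa \<mu> + tb * bary V E d a Pb \<mu>)"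
    using rb bA bB by simp
  have key: "B * A' < B' * A"
  proof -
    have "B * A' * (dab * dba) = (dba * B) * (dab * A')" by (simp add: mult_ac)
    also have "\<dots> = (B' * qa) * (A * qb)" by (simp only: AA BB)
    also have "\<dots> = (B' * A) * (qa * qb)" by (simp add: mult_ac)
    also have "\<dots> < (B' * A) * (dab * dba)"
      using ed Apos by simp
    finally have lt: "B * A' * (dab * dba) < B' * A * (dab * dba)" .
    have "0 < dab * dba" using dpos by simp
    then show ?thesis using lt mult_less_cancel_right_pos by blast
  qed
  have t1: "0 < ta" unfolding ta_def using Apos by simp
  have t2: "tb < 1" unfolding tb_def using Apos by simp
  have t3: "ta < tb"
  proof -
    have "B * (A' + B') < B' * (A + B)" using key by (simp add: algebra_simps)
    then show ?thesis unfolding ta_def tb_def using Apos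
      by (simp add: divide_less_eq less_divide_eq mult.commute)
  qed
  show ?thesis
    by (intro conjI bA bB exI[of _ ta] exI[of _ tb] t1 t2 t3 ra rb')
qed

end
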